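(* Let $N\in\mathbb{N}$, let $(X_i,d_{X_i})$ be Polish spaces, $X=\prod_{i=1}^N X_i$, let $p\in[1,\infty]$, $\mu_i\in\mathcal{P}_p(X_i)$, $\boldsymbol\mu=(\mu_1,\dots,\mu_N)$, $P=\mu_1\otimes\cdots\otimes\mu_N$, and let $c:X\to\mathbb{R}$ be continuous with growth of order $p$ (bounded if $p=\infty$). Let $(\varphi,\psi)$ be convex conjugates and assume $\varphi$ is $(\lambda_1,\lambda_2)$-convex for some $\lambda_1,\lambda_2\ge 0$. Let $\pi^*$ be an optimizer of $\mathsf{OT}_\varphi(\boldsymbol\mu)$ and let $\pi\in\Pi(\boldsymbol\mu)$. Then for any measurable $\rho:X\to\mathbb{R}_+$, \[ \|\rho(\pi^*-\pi)\|_{TV}^2\le C\left(\int|\rho|^2\,d(P+\pi^*+\pi)\right)\left(\mathcal{F}^{\boldsymbol\mu}_\varphi(\pi)-\mathcal{F}^{\boldsymbol\mu}_\varphi(\pi^* )\right), \] where $C=4\max\{\lambda_1,\lambda_2\}$.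
   Context: $(\varphi,\psi)$ convex conjugates: $\varphi:\mathbb{R}_+\to\mathbb{R}$ strictly convex, bounded below, $\varphi(1)=0$, $\varphi(x)/x\to\infty$ as $x\to\infty$, and $\psi(y)=\sup_{x\ge0}(xy-\varphi(x))$. $\varphi$ is $(\lambda_1,\lambda_2)$-convex if $\varphi\in C^2(\mathbb{R}_+)$ and $1/\varphi''(x)\le\lambda_1+\lambda_2 x$ for all $x\in(0,\infty)$. The $\varphi$-divergence is $D_\varphi(Q,P)=\int\varphi(dQ/dP)\,dP$ if $Q\ll P$ and $+\infty$ otherwise. $\Pi(\boldsymbol\mu)$ is the set of probability measures on $X$ with $i$-th marginal $\mu_i$. $\mathcal{F}^{\boldsymbol\mu}_\varphi(\pi)=\int c\,d\pi+D_\varphi(\pi,P)$ and $\mathsf{OT}_\varphi(\boldsymbol\mu)=\inf_{\pi\in\Pi(\boldsymbol\mu)}\mathcal{F}^{\boldsymbol\mu}_\varphi(\pi)$. Growth of order $p<\infty$ means $|c(x)|\le C'(1+d_X(x_0,x)^p)$ for some $x_0\in X$, $C'>0$. $\|\cdot\|_{TV}$ is the total variation norm of signed measures (total mass of the variation, so probability measures have norm one), and $\rho(\pi^*-\pi)$ denotes the signed measure $\rho\pi^*-\rho\pi$, where $\rho\pi$ has density $\rho$ with respect to $\pi$. *)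

theory Defs
  imports "HOL-Probability.Probability"
begin

definition borel_of :: "'a topology \<Rightarrow> 'a measure" where
  "borel_of T = sigma (topspace T) {U. openin T U}"

definition polish_metric :: "'a set \<Rightarrow> ('a \<Rightarrow> 'a \<Rightarrow> real) \<Rightarrow> bool" where
  "polish_metric S d \<longleftrightarrow> Metric_space S d \<and> Metric_space.mcomplete S d
      \<and> separable_space (Metric_space.mtopology S d)"

(* mu is in P_p(S,d), p \<in> [1,\<infinity>]; P_\<infinity> = probability measures with bounded support *)
definition in_Pp :: "ennreal \<Rightarrow> 'a set \<Rightarrow> ('a \<Rightarrow> 'a \<Rightarrow> real) \<Rightarrow> 'a measure \<Rightarrow> bool" where
  "in_Pp p S d mu \<longleftrightarrow> prob_space mu \<and> sets mu = sets (borel_of (Metric_space.mtopology S d))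
     \<and> space mu = S
     \<and> (if p = \<top> then (\<exists>x0\<in>S. \<exists>R. AE x in mu. d x0 x \<le> R)
        else (\<exists>x0\<in>S. integrable mu (\<lambda>x. d x0 x powr enn2real p)))"

definition prod_dist :: "nat \<Rightarrow> (nat \<Rightarrow> 'a \<Rightarrow> 'a \<Rightarrow> real) \<Rightarrow> (nat \<Rightarrow> 'a) \<Rightarrow> (nat \<Rightarrow> 'a) \<Rightarrow> real" where
  "prod_dist N d x y = (\<Sum>i<N. d i (x i) (y i))"

definition growth_order :: "ennreal \<Rightarrow> nat \<Rightarrow> (nat \<Rightarrow> 'a set) \<Rightarrow> (nat \<Rightarrow> 'a \<Rightarrow> 'a \<Rightarrow> real)
     \<Rightarrow> ((nat \<Rightarrow> 'a) \<Rightarrow> real) \<Rightarrow> bool" where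
  "growth_order p N S d c \<longleftrightarrow>
     (if p = \<top> then (\<exists>B. \<forall>x\<in>PiE {..<N} S. \<bar>c x\<bar> \<le> B)
      else (\<exists>x0\<in>PiE {..<N} S. \<exists>C'>0. \<forall>x\<in>PiE {..<N} S.
              \<bar>c x\<bar> \<le> C' * (1 + prod_dist N d x0 x powr enn2real p)))"

definition admissible_phi :: "(real \<Rightarrow> real) \<Rightarrow> bool" where
  "admissible_phi \<phi> \<longleftrightarrow>
     (\<forall>x\<ge>0. \<forall>y\<ge>0. \<forall>t. x \<noteq> y \<and> 0 < t \<and> t < 1 \<longrightarrow>
        \<phi> ((1 - t) * x + t * y) < (1 - t) * \<phi> x + t * \<phi> y)
   \<and> (\<exists>b. \<forall>x\<ge>0. b \<le> \<phi> x)
   \<and> \<phi> 1 = 0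
   \<and> filterlim (\<lambda>x. \<phi> x / x) at_top at_top"

(* (lambda1,lambda2)-convexity: phi is C^2 on (0,\<infinity>) (and continuous on [0,\<infinity>)),
   and 1/phi'' <= lambda1 + lambda2 x, where 1/0 is read as +\<infinity> (so phi'' > 0) *)
definition lambda_convex :: "real \<Rightarrow> real \<Rightarrow> (real \<Rightarrow> real) \<Rightarrow> bool" where
  "lambda_convex l1 l2 \<phi> \<longleftrightarrow>
     continuous_on {0..} \<phi>
   \<and> (\<forall>x>0. \<phi> differentiable (at x) \<and> deriv \<phi> differentiable (at x))
   \<and> continuous_on {0<..} (deriv (deriv \<phi>))
   \<and> (\<forall>x>0. deriv (deriv \<phi>) x > 0 \<and> 1 / deriv (deriv \<phi>) x \<le> l1 + l2 * x)"

(* phi-divergence D_phi(Q,P) (for finite P; phi bounded below, so non-integrability means +\<infinity>) *)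
definition phi_div :: "(real \<Rightarrow> real) \<Rightarrow> 'a measure \<Rightarrow> 'a measure \<Rightarrow> ereal" where
  "phi_div \<phi> Q P =
    (if sets Q = sets P \<and> absolutely_continuous P Q then
       (if integrable P (\<lambda>x. \<phi> (enn2real (RN_deriv P Q x)))
        then ereal (\<integral>x. \<phi> (enn2real (RN_deriv P Q x)) \<partial>P) else \<infinity>)
     else \<infinity>)"

definition couplings :: "nat \<Rightarrow> (nat \<Rightarrow> 'a measure) \<Rightarrow> (nat \<Rightarrow> 'a) measure set" where
  "couplings N \<mu> = {\<pi>. prob_space \<pi> \<and> sets \<pi> = sets (PiM {..<N} \<mu>)
       \<and> (\<forall>i<N. distr \<pi> (\<mu> i) (\<lambda>x. x i) = \<mu> i)}"

definition F_phi :: "(real \<Rightarrow> real) \<Rightarrow> ((nat \<Rightarrow> 'a) \<Rightarrow> real) \<Rightarrow> (nat \<Rightarrow> 'a) measure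
     \<Rightarrow> (nat \<Rightarrow> 'a) measure \<Rightarrow> ereal" where
  "F_phi \<phi> c P \<pi> = ereal (\<integral>x. c x \<partial>\<pi>) + phi_div \<phi> \<pi> P"

definition OT_phi :: "(real \<Rightarrow> real) \<Rightarrow> ((nat \<Rightarrow> 'a) \<Rightarrow> real) \<Rightarrow> nat \<Rightarrow> (nat \<Rightarrow> 'a measure) \<Rightarrow> ereal" where
  "OT_phi \<phi> c N \<mu> = (INF \<pi>\<in>couplings N \<mu>. F_phi \<phi> c (PiM {..<N} \<mu>) \<pi>)"

definition tv_norm_diff :: "'a measure \<Rightarrow> 'a measure \<Rightarrow> ereal" where
  "tv_norm_diff M1 M2 = (SUP F \<in> {F. finite F \<and> disjoint F \<and> F \<subseteq> sets M1
        \<and> (\<forall>A\<in>F. emeasure M1 A < \<top> \<and> emeasure M2 A < \<top>)}.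
        ereal (\<Sum>A\<in>F. \<bar>measure M1 A - measure M2 A\<bar>))"

end

theory Submission
  imports Defs
begin

lemma lc_facts:
  assumes lc: "lambda_convex l1 l2 \<phi>" and "l1 \<ge> 0" "l2 \<ge> 0" and x: "x > 0"
  shows "DERIV \<phi> x :> deriv \<phi> x" "DERIV (deriv \<phi>) x :> deriv (deriv \<phi>) x"
    "deriv (deriv \<phi>) x \<ge> 1 / (max l1 l2 * (1 + x))" "max l1 l2 > 0"
proof -
  from lc x have d1: "\<phi> differentiable (at x)" and d2: "deriv \<phi> differentiable (at x)"
    and pos: "deriv (deriv \<phi>) x > 0" and le: "1 / deriv (deriv \<phi>) x \<le> l1 + l2 * x"
    unfolding lambda_convex_def by auto
  show "DERIV \<phi> x :> deriv \<phi> x" using d1 DERIV_deriv_iff_real_differentiable by blast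
  show "DERIV (deriv \<phi>) x :> deriv (deriv \<phi>) x" using d2 DERIV_deriv_iff_real_differentiable by blast
  have "0 < 1 / deriv (deriv \<phi>) x" using pos by simp
  hence lp: "0 < l1 + l2 * x" using le by linarith
  have "l1 + l2 * x \<le> max l1 l2 * (1 + x)"
    using assms x by (simp add: distrib_left) (smt (verit) mult_right_mono max.cobounded2 max.cobounded1)
  hence "1 / deriv (deriv \<phi>) x \<le> max l1 l2 * (1 + x)" using le by linarith
  moreover have Mpos: "max l1 l2 * (1 + x) > 0" using lp \<open>l1 + l2 * x \<le> _\<close> by linarith
  ultimately show "deriv (deriv \<phi>) x \<ge> 1 / (max l1 l2 * (1 + x))"
    using pos by (simp add: divide_simps) (simp add: mult.commute)
  show "max l1 l2 > 0" using Mpos x by (smt (verit) zero_less_mult_pos2)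
qed

lemma gap_lt:
  assumes lc: "lambda_convex l1 l2 \<phi>" and l: "l1 \<ge> 0" "l2 \<ge> 0" and ab: "0 \<le> a" "a < b"
  shows "(a-b)^2/(8*max l1 l2*(1+a+b)) \<le> (\<phi> a + \<phi> b)/2 - \<phi>((a+b)/2)"
proof -
  define M where "M = max l1 l2"
  have Mpos: "M > 0" unfolding M_def using lc_facts(4)[OF lc l, of 1] by simp
  define k where "k = 1 / (M * (1 + b))"
  have kpos: "k > 0" unfolding k_def using Mpos ab by simp
  define \<psi> where "\<psi> x = \<phi> x - k * x^2 / 2" for x
  define G where "G x = deriv \<phi> x - k * x" for x
  define m where "m = (a+b)/2"
  have am: "a < m" "m < b" using ab unfolding m_def by auto
  have contphi: "continuous_on {0..} \<phi>" using lc unfolding lambda_convex_def by auto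
  have cont\<psi>: "continuous_on {u..v} \<psi>" if "0 \<le> u" for u v
    unfolding \<psi>_def
    by (intro continuous_intros continuous_on_subset[OF contphi]) (use that in auto)
  have der\<psi>: "DERIV \<psi> x :> G x" if "x > 0" for x
    unfolding \<psi>_def G_def
    by (rule derivative_eq_intros lc_facts(1)[OF lc l that] | simp)+
  have Gmono: "G u \<le> G v" if "a < u" "u \<le> v" "v < b" for u v
  proof (rule DERIV_nonneg_imp_increasing_open[OF that(2)])
    fix x assume x: "u < x" "x < v"
    hence xp: "x > 0" using that ab by auto
    have "DERIV G x :> deriv (deriv \<phi>) x - k"
      unfolding G_def
      by (rule derivative_eq_intros lc_facts(2)[OF lc l xp] | simp)+
    moreover have "k \<le> deriv (deriv \<phi>) x"
    proof -
      have "k \<le> 1 / (M * (1 + x))" unfolding k_def using Mpos x that ab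
        by (intro divide_left_mono mult_left_mono mult_pos_pos) auto
      thus ?thesis using lc_facts(3)[OF lc l xp] unfolding M_def by linarith
    qed
    ultimately show "\<exists>y. DERIV G x :> y \<and> 0 \<le> y" by auto
  next
    have "\<forall>x\<in>{u..v}. isCont G x"
    proof
      fix x assume "x \<in> {u..v}"
      hence xp: "x > 0" using that ab by auto
      show "isCont G x" unfolding G_def
        by (intro continuous_intros DERIV_isCont[OF lc_facts(2)[OF lc l xp]])
    qed
    thus "continuous_on {u..v} G" by (simp add: continuous_at_imp_continuous_on)
  qed
  obtain l z where z: "a < z" "z < m" "DERIV \<psi> z :> l" "\<psi> m - \<psi> a = (m - a) * l"
    using MVT[OF am(1) cont\<psi>[OF ab(1)]] der\<psi> ab am
    by (metis real_differentiable_def order.strict_trans1 greaterThanAtMost_iff)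
  have lz: "l = G z" using DERIV_unique[OF z(3) der\<psi>] z ab by auto
  obtain l' z' where z': "m < z'" "z' < b" "DERIV \<psi> z' :> l'" "\<psi> b - \<psi> m = (b - m) * l'"
    using MVT[OF am(2) cont\<psi>] der\<psi> ab am
    by (metis real_differentiable_def order.strict_trans less_eq_real_def)
  have lz': "l' = G z'" using DERIV_unique[OF z'(3) der\<psi>] z' ab am by auto
  have "G z \<le> G z'" using Gmono[of z z'] z z' by auto
  moreover have "m - a = b - m" "m - a > 0" unfolding m_def using ab by (simp_all add: field_simps)
  ultimately have "(m - a) * l \<le> (b - m) * l'" using lz lz' by (metis mult_left_mono less_imp_le)
  hence "\<psi> m - \<psi> a \<le> \<psi> b - \<psi> m"
    using z(4) z'(4) by linarith
  hence key: "k * (a-b)^2 / 8 \<le> (\<phi> a + \<phi> b)/2 - \<phi> m"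
    unfolding \<psi>_def m_def by (simp add: field_simps power2_eq_square)
  have "(a-b)^2/(8*M*(1+a+b)) \<le> k * (a-b)^2 / 8"
  proof -
    have "8*M*(1+b) \<le> 8*M*(1+a+b)" using Mpos ab by simp
    moreover have "0 < 8*M*(1+b)" using Mpos ab by simp
    ultimately have "(a-b)^2/(8*M*(1+a+b)) \<le> (a-b)^2/(8*M*(1+b))"
      using Mpos ab by (intro divide_left_mono) (auto intro!: mult_pos_pos)
    thus ?thesis unfolding k_def by (simp add: mult_ac)
  qed
  thus ?thesis using key unfolding M_def m_def by linarith
qed

lemma gap:
  assumes lc: "lambda_convex l1 l2 \<phi>" and l: "l1 \<ge> 0" "l2 \<ge> 0" and ab: "0 \<le> a" "0 \<le> b"
  shows "(a-b)^2/(8*max l1 l2*(1+a+b)) \<le> (\<phi> a + \<phi> b)/2 - \<phi>((a+b)/2)"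
proof -
  consider "a < b" | "a = b" | "b < a" by linarith
  thus ?thesis
  proof cases
    case 1 thus ?thesis using gap_lt[OF lc l ab(1)] by blast
  next
    case 2 thus ?thesis by simp
  next
    case 3
    have e1: "(b - a)^2/(8*max l1 l2*(1+b+a)) = (a-b)^2/(8*max l1 l2*(1+a+b))"
      by (simp add: power2_commute add_ac)
    have e2: "(\<phi> b + \<phi> a)/2 - \<phi>((b+a)/2) = (\<phi> a + \<phi> b)/2 - \<phi>((a+b)/2)"
      by (simp add: add_ac)
    show ?thesis using gap_lt[OF lc l ab(2) 3] e1 e2 by simp
  qed
qed

lemma cont_borel_of:
  assumes "continuous_map T euclideanreal f"
  shows "f \<in> borel_measurable (borel_of T)"
proof (rule borel_measurableI)
  fix U :: "real set" assume "open U"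
  have sub: "{U. openin T U} \<subseteq> Pow (topspace T)" using openin_subset by blast
  have sp: "space (borel_of T) = topspace T" unfolding borel_of_def
    by (rule space_measure_of_conv)
  have oU: "openin euclidean U" using \<open>open U\<close> open_openin by blast
  have "openin T {x \<in> topspace T. f x \<in> U}"
    by (rule openin_continuous_map_preimage[OF assms oU])
  hence "{x \<in> topspace T. f x \<in> U} \<in> sets (borel_of T)" unfolding borel_of_def
    unfolding sets_measure_of[OF sub] by (intro sigma_sets.Basic CollectI)
  moreover have "f -` U \<inter> space (borel_of T) = {x \<in> topspace T. f x \<in> U}" unfolding sp by blast
  ultimately show "f -` U \<inter> space (borel_of T) \<in> sets (borel_of T)" by simp
qed

lemma dist_cont:
  assumes "Metric_space S d" "z \<in> S"
  shows "continuous_map (Metric_space.mtopology S d) euclideanreal (\<lambda>y. d z y)"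
proof -
  interpret Metric_space S d by fact
  have "continuous_map mtopology euclidean (\<lambda>y. mdist (metric (S,d)) z y)"
    using continuous_map_mdist[of mtopology "metric (S,d)" "\<lambda>_. z" "\<lambda>y. y"] assms(2)
    by simp
  thus ?thesis by simp
qed

lemma pow_sum_bound:
  fixes a :: "nat \<Rightarrow> real"
  assumes "\<And>i. i < N \<Longrightarrow> 0 \<le> a i" "0 \<le> q"
  shows "(\<Sum>i<N. a i) powr q \<le> (\<Sum>i<N. (real N * a i) powr q)"
proof (cases "N = 0")
  case True thus ?thesis by simp
next
  case False
  define m where "m = Max (a ` {..<N})"
  have fin: "finite (a ` {..<N})" "a ` {..<N} \<noteq> {}" using False by auto
  obtain k where k: "k < N" "a k = m" using Max_in[OF fin] unfolding m_def by auto
  have le: "a i \<le> a k" if "i < N" for i using Max_ge[OF fin(1)] that k unfolding m_def by auto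
  have "(\<Sum>i<N. a i) \<le> (\<Sum>i<N. a k)" by (rule sum_mono) (use le in auto)
  also have "\<dots> = real N * a k" by simp
  finally have "(\<Sum>i<N. a i) powr q \<le> (real N * a k) powr q"
    by (intro powr_mono2 assms(2) sum_nonneg) (use assms in auto)
  also have "\<dots> \<le> (\<Sum>i<N. (real N * a i) powr q)"
    by (rule member_le_sum[of k "{..<N}" "\<lambda>i. (real N * a i) powr q"]) (use k in auto)
  finally show ?thesis .
qed

lemma tri_pow:
  fixes A B C q :: real
  assumes "0 \<le> A" "0 \<le> B" "0 \<le> C" "A \<le> B + C" "0 \<le> q"
  shows "A powr q \<le> 2 powr q * (B powr q + C powr q)"
proof -
  have "A \<le> 2 * max B C" using assms by linarith
  hence "A powr q \<le> (2 * max B C) powr q" by (intro powr_mono2) (use assms in auto)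
  also have "\<dots> = 2 powr q * max B C powr q" using assms by (simp add: powr_mult)
  also have "max B C powr q \<le> B powr q + C powr q"
    by (cases "B \<le> C") (auto simp: max_def)
  hence "2 powr q * max B C powr q \<le> 2 powr q * (B powr q + C powr q)" by simp
  finally show ?thesis .
qed

lemma coupling_integrable:
  fixes N :: nat and S :: "nat \<Rightarrow> 'a set" and d :: "nat \<Rightarrow> 'a \<Rightarrow> 'a \<Rightarrow> real"
    and \<mu> :: "nat \<Rightarrow> 'a measure" and c :: "(nat \<Rightarrow> 'a) \<Rightarrow> real"
  assumes polish: "\<And>i. i < N \<Longrightarrow> polish_metric (S i) (d i)"
    and mu: "\<And>i. i < N \<Longrightarrow> in_Pp p (S i) (d i) (\<mu> i)"
    and growth: "growth_order p N S d c"
    and cm: "c \<in> borel_measurable (PiM {..<N} \<mu>)"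
    and nu: "\<nu> \<in> couplings N \<mu>"
  shows "integrable \<nu> c"
proof -
  have ps: "prob_space \<nu>" and sets_nu: "sets \<nu> = sets (PiM {..<N} \<mu>)"
    and marg: "\<And>i. i < N \<Longrightarrow> distr \<nu> (\<mu> i) (\<lambda>x. x i) = \<mu> i"
    using nu unfolding couplings_def by auto
  interpret prob_space \<nu> by fact
  have ms: "Metric_space (S i) (d i)" if "i < N" for i using polish[OF that] unfolding polish_metric_def by auto
  have dnn: "0 \<le> d i x y" if "i < N" for i x y using Metric_space.nonneg[OF ms[OF that]] .
  have spmu: "space (\<mu> i) = S i" if "i < N" for i using mu[OF that] unfolding in_Pp_def by auto
  have setsmu: "sets (\<mu> i) = sets (borel_of (Metric_space.mtopology (S i) (d i)))" if "i < N" for i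
    using mu[OF that] unfolding in_Pp_def by auto
  have space_nu: "space \<nu> = PiE {..<N} S"
    using sets_eq_imp_space_eq[OF sets_nu] spmu by (simp add: space_PiM) (intro PiE_cong, auto)
  have cm': "c \<in> borel_measurable \<nu>" using cm measurable_cong_sets[OF sets_nu refl] by blast
  have comp: "(\<lambda>x. x i) \<in> measurable \<nu> (\<mu> i)" if "i < N" for i
  proof -
    have "(\<lambda>x. x i) \<in> measurable (PiM {..<N} \<mu>) (\<mu> i)"
      by (rule measurable_component_singleton) (use that in simp)
    thus ?thesis by (subst measurable_cong_sets[OF sets_nu refl])
  qed
  show ?thesis
  proof (cases "p = \<top>")
    case True
    then obtain B where B: "\<And>x. x \<in> PiE {..<N} S \<Longrightarrow> \<bar>c x\<bar> \<le> B"
      using growth unfolding growth_order_def by auto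
    show ?thesis by (rule integrable_const_bound[where B=B]) (use B space_nu cm' in auto)
  next
    case False
    define q where "q = enn2real p"
    have q0: "0 \<le> q" unfolding q_def by simp
    obtain x0 C' where x0: "x0 \<in> PiE {..<N} S" and C': "C' > 0"
      and bd: "\<And>x. x \<in> PiE {..<N} S \<Longrightarrow> \<bar>c x\<bar> \<le> C' * (1 + prod_dist N d x0 x powr q)"
      using growth False unfolding growth_order_def q_def by auto
    have "\<exists>z\<in>S i. integrable (\<mu> i) (\<lambda>y. d i z y powr q)" if "i < N" for i
      using mu[OF that] False unfolding in_Pp_def q_def by auto
    then obtain z where z: "\<And>i. i < N \<Longrightarrow> z i \<in> S i"
      and zi: "\<And>i. i < N \<Longrightarrow> integrable (\<mu> i) (\<lambda>y. d i (z i) y powr q)" by metis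
    define h where "h i y = d i (x0 i) y powr q" for i y
    have hm: "h i \<in> borel_measurable (\<mu> i)" if "i < N" for i
    proof -
      have "(\<lambda>y. d i (x0 i) y) \<in> borel_measurable (borel_of (Metric_space.mtopology (S i) (d i)))"
        using cont_borel_of[OF dist_cont[OF ms[OF that]]] x0 that by auto
      hence "(\<lambda>y. d i (x0 i) y) \<in> borel_measurable (\<mu> i)"
        using measurable_cong_sets[OF setsmu[OF that] refl] by blast
      thus ?thesis unfolding h_def by measurable
    qed
    have hi: "integrable (\<mu> i) (h i)" if "i < N" for i
    proof (rule Bochner_Integration.integrable_bound[OF _ hm[OF that]])
      show "integrable (\<mu> i) (\<lambda>y. 2 powr q * (d i (x0 i) (z i) powr q + d i (z i) y powr q))"
        using zi[OF that] prob_space.finite_measure[of "\<mu> i"] mu[OF that] unfolding in_Pp_def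
        by (intro integrable_mult_right Bochner_Integration.integrable_add finite_measure.integrable_const) auto
      show "AE y in \<mu> i. norm (h i y) \<le> norm (2 powr q * (d i (x0 i) (z i) powr q + d i (z i) y powr q))"
      proof (rule AE_I2)
        fix y assume y: "y \<in> space (\<mu> i)"
        have "h i y \<le> 2 powr q * (d i (x0 i) (z i) powr q + d i (z i) y powr q)"
          unfolding h_def
          by (rule tri_pow) (use ms[OF that] y spmu[OF that] z[OF that] x0 that q0 in
              \<open>auto simp: Metric_space.nonneg intro: Metric_space.triangle\<close>)
        moreover have "0 \<le> h i y" unfolding h_def by simp
        ultimately show "norm (h i y) \<le> norm (2 powr q * (d i (x0 i) (z i) powr q + d i (z i) y powr q))"
          by simp
      qed
    qed
    have hnu: "integrable \<nu> (\<lambda>x. h i (x i))" if "i < N" for i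
      using hi[OF that] integrable_distr_eq[OF comp[OF that] hm[OF that]] marg[OF that] by simp
    define g where "g x = C' * (1 + (\<Sum>i<N. real N powr q * h i (x i)))" for x
    have "integrable \<nu> (\<lambda>x. \<Sum>i<N. real N powr q * h i (x i))"
      by (intro Bochner_Integration.integrable_sum integrable_mult_right hnu) auto
    hence gi: "integrable \<nu> g" unfolding g_def
      by (intro integrable_mult_right Bochner_Integration.integrable_add integrable_const) auto
    show ?thesis
    proof (rule Bochner_Integration.integrable_bound[OF gi cm'], rule AE_I2)
      fix x assume x: "x \<in> space \<nu>"
      hence xS: "x \<in> PiE {..<N} S" using space_nu by simp
      have "prod_dist N d x0 x powr q \<le> (\<Sum>i<N. (real N * d i (x0 i) (x i)) powr q)"
        unfolding prod_dist_def
        by (rule pow_sum_bound) (use dnn q0 in auto)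
      also have "\<dots> = (\<Sum>i<N. real N powr q * h i (x i))"
        unfolding h_def by (intro sum.cong refl) (simp add: powr_mult dnn)
      finally have "\<bar>c x\<bar> \<le> g x" unfolding g_def using bd[OF xS] C'
        by (smt (verit) mult_left_mono)
      moreover have "0 \<le> g x" unfolding g_def h_def using C'
        by (intro mult_nonneg_nonneg add_nonneg_nonneg sum_nonneg) auto
      ultimately show "norm (c x) \<le> norm (g x)" by simp
    qed
  qed
qed

lemma measure_density_real:
  fixes u :: "'b \<Rightarrow> real"
  assumes [measurable]: "u \<in> borel_measurable P" and nn: "\<And>x. x \<in> space P \<Longrightarrow> 0 \<le> u x"
    and A: "A \<in> sets P" and fin: "emeasure (density P (\<lambda>x. ennreal (u x))) A < \<top>"
  shows "integrable P (\<lambda>x. u x * indicator A x)"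
    "measure (density P (\<lambda>x. ennreal (u x))) A = (\<integral>x. u x * indicator A x \<partial>P)"
proof -
  have e: "emeasure (density P (\<lambda>x. ennreal (u x))) A = (\<integral>\<^sup>+x. ennreal (u x * indicator A x) \<partial>P)"
    using A by (simp add: emeasure_density) (intro nn_integral_cong, simp split: split_indicator)
  have "(\<integral>\<^sup>+x. ennreal (norm (u x * indicator A x)) \<partial>P) = (\<integral>\<^sup>+x. ennreal (u x * indicator A x) \<partial>P)"
    using nn by (intro nn_integral_cong) (simp split: split_indicator)
  moreover have "(\<lambda>x. u x * indicator A x) \<in> borel_measurable P"
    by (rule borel_measurable_times[OF assms(1) borel_measurable_indicator[OF A]])
  ultimately show int: "integrable P (\<lambda>x. u x * indicator A x)"
    using fin e by (intro integrableI_bounded) auto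
  have "(\<integral>\<^sup>+x. ennreal (u x * indicator A x) \<partial>P) = ennreal (\<integral>x. u x * indicator A x \<partial>P)"
    by (rule nn_integral_eq_integral[OF int]) (use nn in \<open>auto intro!: AE_I2 simp: split: split_indicator\<close>)
  thus "measure (density P (\<lambda>x. ennreal (u x))) A = (\<integral>x. u x * indicator A x \<partial>P)"
    unfolding measure_def e
    by (simp add: integral_nonneg_AE nn AE_I2 split: split_indicator)
qed

lemma ereal_le_enn2ereal: "ennreal x \<le> y \<Longrightarrow> 0 \<le> x \<Longrightarrow> ereal x \<le> enn2ereal y"
  by (metis enn2ereal_ennreal less_eq_ennreal.rep_eq)

lemma tv_bound:
  fixes P :: "'b measure" and u v :: "'b \<Rightarrow> real"
  assumes [measurable]: "u \<in> borel_measurable P" "v \<in> borel_measurable P"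
    and nnu: "\<And>x. x \<in> space P \<Longrightarrow> 0 \<le> u x" and nnv: "\<And>x. x \<in> space P \<Longrightarrow> 0 \<le> v x"
  shows "tv_norm_diff (density P (\<lambda>x. ennreal (u x))) (density P (\<lambda>x. ennreal (v x)))
     \<le> enn2ereal (\<integral>\<^sup>+x. ennreal \<bar>u x - v x\<bar> \<partial>P)"
  unfolding tv_norm_diff_def
proof (rule SUP_least, clarify)
  fix F assume F: "finite F" "disjoint F" "F \<subseteq> sets (density P (\<lambda>x. ennreal (u x)))"
    and finF: "\<forall>A\<in>F. emeasure (density P (\<lambda>x. ennreal (u x))) A < \<top> \<and>
                  emeasure (density P (\<lambda>x. ennreal (v x))) A < \<top>"
  define w where "w x = \<bar>u x - v x\<bar>" for x
  have Fs: "A \<in> sets P" if "A \<in> F" for A using F(3) that by auto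
  have trm: "ennreal \<bar>measure (density P (\<lambda>x. ennreal (u x))) A - measure (density P (\<lambda>x. ennreal (v x))) A\<bar>
      \<le> (\<integral>\<^sup>+x. ennreal (w x) * indicator A x \<partial>P)" if A: "A \<in> F" for A
  proof -
    note mu = measure_density_real[OF _ nnu Fs[OF A]] and mv = measure_density_real[OF _ nnv Fs[OF A]]
    have iu: "integrable P (\<lambda>x. u x * indicator A x)" and iv: "integrable P (\<lambda>x. v x * indicator A x)"
      using mu(1) mv(1) finF A by auto
    have "\<bar>measure (density P (\<lambda>x. ennreal (u x))) A - measure (density P (\<lambda>x. ennreal (v x))) A\<bar>
        = \<bar>\<integral>x. u x * indicator A x - v x * indicator A x \<partial>P\<bar>"
      using mu(2) mv(2) finF A iu iv by simp
    also have "\<dots> \<le> (\<integral>x. \<bar>u x * indicator A x - v x * indicator A x\<bar> \<partial>P)"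
      using integral_norm_bound[of P "\<lambda>x. u x * indicator A x - v x * indicator A x"] by simp
    also have "\<dots> = (\<integral>x. w x * indicator A x \<partial>P)"
      unfolding w_def by (intro Bochner_Integration.integral_cong) (auto split: split_indicator)
    finally have le: "\<bar>measure (density P (\<lambda>x. ennreal (u x))) A - measure (density P (\<lambda>x. ennreal (v x))) A\<bar>
        \<le> (\<integral>x. w x * indicator A x \<partial>P)" .
    have iw: "integrable P (\<lambda>x. w x * indicator A x)"
    proof -
      have "integrable P (\<lambda>x. \<bar>u x * indicator A x - v x * indicator A x\<bar>)"
        using iu iv by auto
      moreover have "(\<lambda>x. w x * indicator A x) = (\<lambda>x. \<bar>u x * indicator A x - v x * indicator A x\<bar>)"
        unfolding w_def by (auto simp: fun_eq_iff split: split_indicator)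
      ultimately show ?thesis by simp
    qed
    have "ennreal (\<integral>x. w x * indicator A x \<partial>P) = (\<integral>\<^sup>+x. ennreal (w x * indicator A x) \<partial>P)"
      by (rule nn_integral_eq_integral[OF iw, symmetric]) (auto simp: w_def intro!: AE_I2 split: split_indicator)
    also have "\<dots> = (\<integral>\<^sup>+x. ennreal (w x) * indicator A x \<partial>P)"
      by (intro nn_integral_cong) (simp split: split_indicator)
    finally show ?thesis using le ennreal_leI by metis
  qed
  have "ennreal (\<Sum>A\<in>F. \<bar>measure (density P (\<lambda>x. ennreal (u x))) A - measure (density P (\<lambda>x. ennreal (v x))) A\<bar>)
      = (\<Sum>A\<in>F. ennreal \<bar>measure (density P (\<lambda>x. ennreal (u x))) A - measure (density P (\<lambda>x. ennreal (v x))) A\<bar>)"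
    by (rule sum_ennreal[symmetric]) simp
  also have "\<dots> \<le> (\<Sum>A\<in>F. \<integral>\<^sup>+x. ennreal (w x) * indicator A x \<partial>P)"
    by (rule sum_mono) (rule trm)
  also have "\<dots> = (\<integral>\<^sup>+x. (\<Sum>A\<in>F. ennreal (w x) * indicator A x) \<partial>P)"
  proof (rule nn_integral_sum[symmetric])
    fix A assume "A \<in> F"
    hence [measurable]: "A \<in> sets P" by (rule Fs)
    show "(\<lambda>x. ennreal (w x) * indicator A x) \<in> borel_measurable P" unfolding w_def by measurable
  qed
  also have "\<dots> = (\<integral>\<^sup>+x. ennreal (w x) * indicator (\<Union>F) x \<partial>P)"
  proof (intro nn_integral_cong)
    fix x
    have "disjoint_family_on id F" using F(2) unfolding disjoint_family_on_def disjoint_def by auto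
    hence "indicator (\<Union>(id ` F)) x = (\<Sum>A\<in>F. indicator (id A) x :: ennreal)"
      by (rule indicator_UN_disjoint[OF F(1)])
    thus "(\<Sum>A\<in>F. ennreal (w x) * indicator A x) = ennreal (w x) * indicator (\<Union>F) x"
      by (simp add: sum_distrib_left)
  qed
  also have "\<dots> \<le> (\<integral>\<^sup>+x. ennreal (w x) \<partial>P)"
    by (intro nn_integral_mono) (simp split: split_indicator)
  finally show "ereal (\<Sum>A\<in>F. \<bar>measure (density P (\<lambda>x. ennreal (u x))) A - measure (density P (\<lambda>x. ennreal (v x))) A\<bar>)
      \<le> enn2ereal (\<integral>\<^sup>+x. ennreal \<bar>u x - v x\<bar> \<partial>P)"
    unfolding w_def by (rule ereal_le_enn2ereal) (auto intro: sum_nonneg)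
qed

lemma rn_repr:
  fixes P \<nu> :: "'b measure"
  assumes sf: "sigma_finite_measure P" and fm: "finite_measure \<nu>" and ne: "phi_div \<phi> \<nu> P \<noteq> \<infinity>"
  obtains f where "f \<in> borel_measurable P" "\<And>x. 0 \<le> f x"
    "\<nu> = density P (\<lambda>x. ennreal (f x))" "integrable P (\<lambda>x. \<phi> (f x))"
    "phi_div \<phi> \<nu> P = ereal (\<integral>x. \<phi> (f x) \<partial>P)"
proof -
  interpret sigma_finite_measure P by fact
  have se: "sets \<nu> = sets P" and ac: "absolutely_continuous P \<nu>"
    and int: "integrable P (\<lambda>x. \<phi> (enn2real (RN_deriv P \<nu> x)))"
    using ne unfolding phi_div_def by (auto split: if_splits)
  have pd: "phi_div \<phi> \<nu> P = ereal (\<integral>x. \<phi> (enn2real (RN_deriv P \<nu> x)) \<partial>P)"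
    using se ac int unfolding phi_div_def by auto
  define f where "f x = enn2real (RN_deriv P \<nu> x)" for x
  have fm': "f \<in> borel_measurable P" unfolding f_def by measurable
  have sfn: "sigma_finite_measure \<nu>" using fm by (simp add: finite_measure.sigma_finite_measure)
  have fin: "AE x in P. RN_deriv P \<nu> x \<noteq> \<infinity>" by (rule RN_deriv_finite[OF sfn ac se])
  have "\<nu> = density P (RN_deriv P \<nu>)" using density_RN_deriv[OF ac se] by simp
  also have "\<dots> = density P (\<lambda>x. ennreal (f x))"
    by (rule density_cong) (use fm' fin in \<open>auto simp: f_def less_top\<close>)
  finally have nu: "\<nu> = density P (\<lambda>x. ennreal (f x))" .
  have int': "integrable P (\<lambda>x. \<phi> (f x))" using int unfolding f_def .
  have pd': "phi_div \<phi> \<nu> P = ereal (\<integral>x. \<phi> (f x) \<partial>P)" using pd unfolding f_def .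
  show ?thesis by (rule that[OF fm' _ nu int' pd']) (simp add: f_def)
qed

lemma half_sum: "ennreal (1/2) * (x + x) = x"
proof -
  have "ennreal (1/2) * (x + x) = (ennreal (1/2) * 2) * x" by (simp add: mult_2[symmetric] mult.assoc)
  also have "ennreal (1/2) * 2 = 1"
  proof -
    have "ennreal (1/2) * 2 = ennreal (1/2) * ennreal 2" by simp
    also have "\<dots> = ennreal (1/2 * 2)" by (rule ennreal_mult[symmetric]) auto
    finally show ?thesis by simp
  qed
  finally show ?thesis by simp
qed

lemma mix_coupling:
  fixes P :: "(nat \<Rightarrow> 'a) measure" and \<mu> :: "nat \<Rightarrow> 'a measure"
  assumes Pdef: "P = PiM {..<N} \<mu>"
    and f[measurable]: "f \<in> borel_measurable P" and g[measurable]: "g \<in> borel_measurable P"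
    and fn: "\<And>x. 0 \<le> f x" and gn: "\<And>x. 0 \<le> g x"
    and pf: "density P (\<lambda>x. ennreal (f x)) \<in> couplings N \<mu>"
    and pg: "density P (\<lambda>x. ennreal (g x)) \<in> couplings N \<mu>"
  shows "density P (\<lambda>x. ennreal ((f x + g x)/2)) \<in> couplings N \<mu>"
proof -
  let ?h = "density P (\<lambda>x. ennreal ((f x + g x)/2))"
  let ?f = "density P (\<lambda>x. ennreal (f x))" and ?g = "density P (\<lambda>x. ennreal (g x))"
  have em: "emeasure ?h A = ennreal (1/2) * (emeasure ?f A + emeasure ?g A)" if A[measurable]: "A \<in> sets P" for A
  proof -
    have "emeasure ?h A = (\<integral>\<^sup>+x. ennreal ((f x + g x)/2) * indicator A x \<partial>P)"
      by (simp add: emeasure_density)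
    also have "\<dots> = (\<integral>\<^sup>+x. ennreal (1/2) * (ennreal (f x) * indicator A x + ennreal (g x) * indicator A x) \<partial>P)"
    proof (intro nn_integral_cong)
      fix x
      have e1: "(f x + g x)/2 = (1/2) * (f x + g x)" by simp
      have e2: "ennreal ((1/2) * (f x + g x)) = ennreal (1/2) * ennreal (f x + g x)"
        by (rule ennreal_mult) (use fn gn in auto)
      have e3: "ennreal (f x + g x) = ennreal (f x) + ennreal (g x)"
        by (rule ennreal_plus) (use fn gn in auto)
      show "ennreal ((f x + g x)/2) * indicator A x = ennreal (1/2) * (ennreal (f x) * indicator A x + ennreal (g x) * indicator A x)"
        unfolding e1 e2 e3 by (simp only: distrib_right mult.assoc)
    qed
    also have "\<dots> = ennreal (1/2) * ((\<integral>\<^sup>+x. ennreal (f x) * indicator A x \<partial>P) + (\<integral>\<^sup>+x. ennreal (g x) * indicator A x \<partial>P))"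
      by (simp add: nn_integral_cmult nn_integral_add)
    also have "\<dots> = ennreal (1/2) * (emeasure ?f A + emeasure ?g A)"
      by (simp add: emeasure_density)
    finally show ?thesis .
  qed
  have sP: "sets P = sets (PiM {..<N} \<mu>)" using Pdef by simp
  have "prob_space ?h"
  proof (rule prob_spaceI)
    have "prob_space ?f" "prob_space ?g" using pf pg unfolding couplings_def by auto
    hence "emeasure ?f (space ?f) = 1" "emeasure ?g (space ?g) = 1"
      using prob_space.emeasure_space_1 by blast+
    hence "emeasure ?f (space P) = 1" "emeasure ?g (space P) = 1" by simp_all
    thus "emeasure ?h (space ?h) = 1" using em[of "space P"] half_sum[of 1] by simp
  qed
  moreover have "distr ?h (\<mu> i) (\<lambda>x. x i) = \<mu> i" if i: "i < N" for i
  proof (rule measure_eqI)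
    show "sets (distr ?h (\<mu> i) (\<lambda>x. x i)) = sets (\<mu> i)" by simp
    fix A assume "A \<in> sets (distr ?h (\<mu> i) (\<lambda>x. x i))"
    hence A: "A \<in> sets (\<mu> i)" by simp
    have meas: "(\<lambda>x. x i) \<in> measurable P (\<mu> i)" unfolding Pdef
      by (rule measurable_component_singleton) (use i in simp)
    hence measd: "(\<lambda>x. x i) \<in> measurable (density P u) (\<mu> i)" for u by simp
    have B: "(\<lambda>x. x i) -` A \<inter> space P \<in> sets P" using meas A by (rule measurable_sets)
    have "emeasure (distr ?f (\<mu> i) (\<lambda>x. x i)) A = emeasure (\<mu> i) A"
      using pf i unfolding couplings_def by auto
    hence ef: "emeasure ?f ((\<lambda>x. x i) -` A \<inter> space P) = emeasure (\<mu> i) A"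
      using emeasure_distr[OF measd A] by simp
    have "emeasure (distr ?g (\<mu> i) (\<lambda>x. x i)) A = emeasure (\<mu> i) A"
      using pg i unfolding couplings_def by auto
    hence eg: "emeasure ?g ((\<lambda>x. x i) -` A \<inter> space P) = emeasure (\<mu> i) A"
      using emeasure_distr[OF measd A] by simp
    show "emeasure (distr ?h (\<mu> i) (\<lambda>x. x i)) A = emeasure (\<mu> i) A"
      using emeasure_distr[OF measd A] em[OF B] ef eg half_sum by simp
  qed
  ultimately show ?thesis unfolding couplings_def using sP by auto
qed

lemma tv_nonneg: "0 \<le> tv_norm_diff M1 M2"
  unfolding tv_norm_diff_def
  by (rule SUP_upper2[where i="{}"]) auto

lemma tv_zero:
  fixes \<rho> :: "'b \<Rightarrow> real"
  assumes [measurable]: "\<rho> \<in> borel_measurable M1" "\<rho> \<in> borel_measurable M2"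
    and z1: "AE x in M1. \<rho> x = 0" and z2: "AE x in M2. \<rho> x = 0"
  shows "tv_norm_diff (density M1 (\<lambda>x. ennreal (\<rho> x))) (density M2 (\<lambda>x. ennreal (\<rho> x))) = 0"
proof -
  have d1: "density M1 (\<lambda>x. ennreal (\<rho> x)) = density M1 (\<lambda>x. 0)"
    by (rule density_cong) (use z1 in auto)
  have d2: "density M2 (\<lambda>x. ennreal (\<rho> x)) = density M2 (\<lambda>x. 0)"
    by (rule density_cong) (use z2 in auto)
  have m0: "measure (density M (\<lambda>x. 0)) A = 0" for M :: "'b measure" and A
    by (cases "A \<in> sets M") (auto simp: measure_def emeasure_density emeasure_notin_sets)
  have "tv_norm_diff (density M1 (\<lambda>x. ennreal (\<rho> x))) (density M2 (\<lambda>x. ennreal (\<rho> x))) \<le> 0"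
    unfolding tv_norm_diff_def d1 d2 by (rule SUP_least) (simp add: m0)
  thus ?thesis using tv_nonneg by (metis order.antisym)
qed

lemma ereal_sq_mono: "0 \<le> (a::ereal) \<Longrightarrow> a \<le> b \<Longrightarrow> a^2 \<le> b^2"
  unfolding power2_eq_square by (rule ereal_mult_mono') auto

lemma phi_meas:
  fixes u :: "'b \<Rightarrow> real"
  assumes cont: "continuous_on {0..} \<phi>" and u: "u \<in> borel_measurable M" and nn: "\<And>x. x \<in> space M \<Longrightarrow> 0 \<le> u x"
  shows "(\<lambda>x. \<phi> (u x)) \<in> borel_measurable M"
proof -
  define \<phi>' where "\<phi>' y = \<phi> (max 0 y)" for y
  have "continuous_on UNIV \<phi>'" unfolding \<phi>'_def
    by (rule continuous_on_compose2[OF cont]) (auto intro!: continuous_intros)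
  hence "\<phi>' \<in> borel_measurable borel" by (rule borel_measurable_continuous_onI)
  hence "(\<lambda>x. \<phi>' (u x)) \<in> borel_measurable M" using u by measurable
  moreover have "\<And>x. x \<in> space M \<Longrightarrow> \<phi>' (u x) = \<phi> (u x)" unfolding \<phi>'_def using nn by simp
  ultimately show ?thesis by (metis (no_types, lifting) measurable_cong)
qed

lemma mid_phi_div:
  fixes P :: "'b measure" and h :: "'b \<Rightarrow> real"
  assumes sf: "sigma_finite_measure P" and cont: "continuous_on {0..} \<phi>"
    and h[measurable]: "h \<in> borel_measurable P" and hn: "\<And>x. 0 \<le> h x"
    and int: "integrable P (\<lambda>x. \<phi> (h x))"
  shows "phi_div \<phi> (density P (\<lambda>x. ennreal (h x))) P = ereal (\<integral>x. \<phi> (h x) \<partial>P)"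
proof -
  interpret sigma_finite_measure P by fact
  have "AE x in P. ennreal (h x) = RN_deriv P (density P (\<lambda>x. ennreal (h x))) x"
    by (rule RN_deriv_unique) auto
  hence ae: "AE x in P. \<phi> (enn2real (RN_deriv P (density P (\<lambda>x. ennreal (h x))) x)) = \<phi> (h x)"
    by eventually_elim (metis enn2real_ennreal hn)
  have m1: "(\<lambda>x. \<phi> (enn2real (RN_deriv P (density P (\<lambda>x. ennreal (h x))) x))) \<in> borel_measurable P"
    by (rule phi_meas[OF cont]) auto
  have m2: "(\<lambda>x. \<phi> (h x)) \<in> borel_measurable P" by (rule phi_meas[OF cont h]) (use hn in auto)
  have i1: "integrable P (\<lambda>x. \<phi> (enn2real (RN_deriv P (density P (\<lambda>x. ennreal (h x))) x)))"
    using integrable_cong_AE[OF m1 m2 ae] int by simp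
  have e1: "(\<integral>x. \<phi> (enn2real (RN_deriv P (density P (\<lambda>x. ennreal (h x))) x)) \<partial>P) = (\<integral>x. \<phi> (h x) \<partial>P)"
    by (rule integral_cong_AE[OF m1 m2 ae])
  have "absolutely_continuous P (density P (\<lambda>x. ennreal (h x)))"
    by (rule absolutely_continuousI_density) simp
  thus ?thesis unfolding phi_div_def using i1 e1 by simp
qed

lemma aux3: "0 \<le> (a::real) \<Longrightarrow> 0 \<le> f \<Longrightarrow> 0 \<le> g \<Longrightarrow> ennreal (a + g*a + f*a) = ennreal a + ennreal g * ennreal a + ennreal f * ennreal a"
proof -
  assume h: "0 \<le> a" "0 \<le> f" "0 \<le> g"
  have "ennreal (a + g*a + f*a) = ennreal (a + g*a) + ennreal (f*a)" by (rule ennreal_plus) (use h in auto)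
  also have "ennreal (a + g*a) = ennreal a + ennreal (g*a)" by (rule ennreal_plus) (use h in auto)
  also have "ennreal (g*a) = ennreal g * ennreal a" by (rule ennreal_mult) (use h in auto)
  also have "ennreal (f*a) = ennreal f * ennreal a" by (rule ennreal_mult) (use h in auto)
  finally show ?thesis .
qed

theorem lemma3p3:
  fixes N :: nat
    and S :: "nat \<Rightarrow> 'a set" and d :: "nat \<Rightarrow> 'a \<Rightarrow> 'a \<Rightarrow> real"
    and p :: ennreal
    and \<mu> :: "nat \<Rightarrow> 'a measure"
    and c :: "(nat \<Rightarrow> 'a) \<Rightarrow> real"
    and \<phi> :: "real \<Rightarrow> real" and l1 l2 :: real
    and \<pi>star \<pi> :: "(nat \<Rightarrow> 'a) measure"
    and \<rho> :: "(nat \<Rightarrow> 'a) \<Rightarrow> real"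
  assumes polish: "\<And>i. i < N \<Longrightarrow> polish_metric (S i) (d i)"
    and p_ge: "1 \<le> p"
    and mu: "\<And>i. i < N \<Longrightarrow> in_Pp p (S i) (d i) (\<mu> i)"
    and c_cont: "continuous_map
        (product_topology (\<lambda>i. Metric_space.mtopology (S i) (d i)) {..<N}) euclideanreal c"
    and c_growth: "growth_order p N S d c"
    and phi: "admissible_phi \<phi>"
    and lam: "l1 \<ge> 0" "l2 \<ge> 0" "lambda_convex l1 l2 \<phi>"
    and opt: "\<pi>star \<in> couplings N \<mu>"
      "F_phi \<phi> c (PiM {..<N} \<mu>) \<pi>star = OT_phi \<phi> c N \<mu>"
    and pi: "\<pi> \<in> couplings N \<mu>"
    and rho_meas: "\<rho> \<in> borel_measurable (PiM {..<N} \<mu>)"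
    and rho_nonneg: "\<And>x. x \<in> space (PiM {..<N} \<mu>) \<Longrightarrow> 0 \<le> \<rho> x"
  shows "(tv_norm_diff (density \<pi>star (\<lambda>x. ennreal (\<rho> x))) (density \<pi> (\<lambda>x. ennreal (\<rho> x)))) ^ 2
     \<le> ereal (4 * max l1 l2)
        * enn2ereal ((\<integral>\<^sup>+x. ennreal (\<bar>\<rho> x\<bar> ^ 2) \<partial>(PiM {..<N} \<mu>))
                   + (\<integral>\<^sup>+x. ennreal (\<bar>\<rho> x\<bar> ^ 2) \<partial>\<pi>star)
                   + (\<integral>\<^sup>+x. ennreal (\<bar>\<rho> x\<bar> ^ 2) \<partial>\<pi>))
        * (F_phi \<phi> c (PiM {..<N} \<mu>) \<pi> - F_phi \<phi> c (PiM {..<N} \<mu>) \<pi>star)"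
proof -
  define P where "P = PiM {..<N} \<mu>"
  note Pfold = P_def[symmetric]
  have probP: "prob_space P" unfolding P_def
    by (rule prob_space_PiM) (use mu in \<open>auto simp: in_Pp_def\<close>)
  interpret P: prob_space P by fact
  have sfP: "sigma_finite_measure P" by unfold_locales
  have contphi: "continuous_on {0..} \<phi>" using lam(3) unfolding lambda_convex_def by auto
  obtain b where b: "\<And>x. 0 \<le> x \<Longrightarrow> b \<le> \<phi> x" using phi unfolding admissible_phi_def by auto
  define M where "M = max l1 l2"
  have Mpos: "M > 0" unfolding M_def using lc_facts(4)[OF lam(3) lam(1) lam(2), of 1] by simp
  have ps: "prob_space \<pi>star" "sets \<pi>star = sets P" using opt(1) unfolding couplings_def P_def by auto
  have pp: "prob_space \<pi>" "sets \<pi> = sets P" using pi unfolding couplings_def P_def by auto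
  have rho_m[measurable]: "\<rho> \<in> borel_measurable P" using rho_meas unfolding P_def .
  have rho_nn: "\<And>x. x \<in> space P \<Longrightarrow> 0 \<le> \<rho> x" using rho_nonneg unfolding P_def .
  define I where "I = (\<integral>\<^sup>+x. ennreal (\<bar>\<rho> x\<bar> ^ 2) \<partial>P) + (\<integral>\<^sup>+x. ennreal (\<bar>\<rho> x\<bar> ^ 2) \<partial>\<pi>star)
                   + (\<integral>\<^sup>+x. ennreal (\<bar>\<rho> x\<bar> ^ 2) \<partial>\<pi>)"
  define Fs where "Fs = F_phi \<phi> c P \<pi>star"
  define Fp where "Fp = F_phi \<phi> c P \<pi>"
  define TV where "TV = tv_norm_diff (density \<pi>star (\<lambda>x. ennreal (\<rho> x))) (density \<pi> (\<lambda>x. ennreal (\<rho> x)))"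
  have OTle: "Fs \<le> F_phi \<phi> c P \<nu>" if "\<nu> \<in> couplings N \<mu>" for \<nu>
    using opt(2) that unfolding Fs_def P_def OT_phi_def by (metis INF_lower)
  have Fle: "Fs \<le> Fp" unfolding Fp_def by (rule OTle[OF pi])
  have goal: "TV ^ 2 \<le> ereal (4 * M) * enn2ereal I * (Fp - Fs)"
  proof (cases "I = 0")
    case True
    have "(\<integral>\<^sup>+x. ennreal (\<bar>\<rho> x\<bar> ^ 2) \<partial>\<pi>star) = 0" "(\<integral>\<^sup>+x. ennreal (\<bar>\<rho> x\<bar> ^ 2) \<partial>\<pi>) = 0"
      using True unfolding I_def by auto
    moreover have "(\<lambda>x. ennreal (\<bar>\<rho> x\<bar> ^ 2)) \<in> borel_measurable \<pi>star"
      "(\<lambda>x. ennreal (\<bar>\<rho> x\<bar> ^ 2)) \<in> borel_measurable \<pi>"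
    proof -
      have mP: "(\<lambda>x. ennreal (\<bar>\<rho> x\<bar> ^ 2)) \<in> borel_measurable P" by measurable
      show "(\<lambda>x. ennreal (\<bar>\<rho> x\<bar> ^ 2)) \<in> borel_measurable \<pi>star"
        by (subst measurable_cong_sets[OF ps(2) refl]) (rule mP)
      show "(\<lambda>x. ennreal (\<bar>\<rho> x\<bar> ^ 2)) \<in> borel_measurable \<pi>"
        by (subst measurable_cong_sets[OF pp(2) refl]) (rule mP)
    qed
    ultimately have "AE x in \<pi>star. ennreal (\<bar>\<rho> x\<bar> ^ 2) = 0" "AE x in \<pi>. ennreal (\<bar>\<rho> x\<bar> ^ 2) = 0"
      by (simp_all add: nn_integral_0_iff_AE)
    hence z: "AE x in \<pi>star. \<rho> x = 0" "AE x in \<pi>. \<rho> x = 0" by (auto elim!: AE_mp)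
    have "TV = 0" unfolding TV_def
    proof (rule tv_zero[OF _ _ z])
      show "\<rho> \<in> borel_measurable \<pi>star" by (subst measurable_cong_sets[OF ps(2) refl]) (rule rho_m)
      show "\<rho> \<in> borel_measurable \<pi>" by (subst measurable_cong_sets[OF pp(2) refl]) (rule rho_m)
    qed
    thus ?thesis using True by (simp add: zero_ennreal.rep_eq power2_eq_square)
  next
    case Inz: False
    have Ipos: "0 < enn2ereal I" using Inz
      by (metis enn2ereal_inject zero_ennreal.rep_eq enn2ereal_nonneg order_le_less)
    show ?thesis
    proof (cases "Fs = \<infinity> \<or> Fp = \<infinity>")
      case True
      hence "Fp = \<infinity>" using Fle by auto
      moreover have "0 < ereal (4 * M) * enn2ereal I" using Ipos Mpos by (simp add: ereal_zero_less_0_iff)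
      ultimately have "ereal (4 * M) * enn2ereal I * (Fp - Fs) = \<infinity>" using Ipos Mpos by simp
      thus ?thesis by (simp only:) simp
    next
      case False
      hence fin: "Fs \<noteq> \<infinity>" "Fp \<noteq> \<infinity>" by auto
      have pdS: "phi_div \<phi> \<pi>star P \<noteq> \<infinity>" using fin(1) unfolding Fs_def F_phi_def by auto
      have pdP: "phi_div \<phi> \<pi> P \<noteq> \<infinity>" using fin(2) unfolding Fp_def F_phi_def by auto
      obtain g where g[measurable]: "g \<in> borel_measurable P" and gn: "\<And>x. 0 \<le> g x"
        and gd: "\<pi>star = density P (\<lambda>x. ennreal (g x))" and gi: "integrable P (\<lambda>x. \<phi> (g x))"
        and gD: "phi_div \<phi> \<pi>star P = ereal (\<integral>x. \<phi> (g x) \<partial>P)"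
        using rn_repr[OF sfP prob_space.finite_measure[OF ps(1)] pdS] by metis
      obtain f where f[measurable]: "f \<in> borel_measurable P" and fn: "\<And>x. 0 \<le> f x"
        and fd: "\<pi> = density P (\<lambda>x. ennreal (f x))" and fi: "integrable P (\<lambda>x. \<phi> (f x))"
        and fD: "phi_div \<phi> \<pi> P = ereal (\<integral>x. \<phi> (f x) \<partial>P)"
        using rn_repr[OF sfP prob_space.finite_measure[OF pp(1)] pdP] by metis
      define Cs where "Cs = (\<integral>x. c x \<partial>\<pi>star)"
      define Cp where "Cp = (\<integral>x. c x \<partial>\<pi>)"
      define Ds where "Ds = (\<integral>x. \<phi> (g x) \<partial>P)"
      define Dp where "Dp = (\<integral>x. \<phi> (f x) \<partial>P)"
      have FsE: "Fs = ereal (Cs + Ds)" unfolding Fs_def F_phi_def gD Cs_def Ds_def by simp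
      have FpE: "Fp = ereal (Cp + Dp)" unfolding Fp_def F_phi_def fD Cp_def Dp_def by simp
      define h where "h x = (f x + g x) / 2" for x
      have h[measurable]: "h \<in> borel_measurable P" unfolding h_def by measurable
      have hn: "\<And>x. 0 \<le> h x" unfolding h_def using fn gn by (simp add: add_nonneg_nonneg)
      define \<pi>h where "\<pi>h = density P (\<lambda>x. ennreal (h x))"
      have \<pi>h_c: "\<pi>h \<in> couplings N \<mu>" unfolding \<pi>h_def h_def
        by (rule mix_coupling[OF P_def f g fn gn]) (use pi opt(1) fd gd in auto)
      have Ch: "(\<integral>x. c x \<partial>\<pi>h) = (Cp + Cs) / 2"
      proof (cases "c \<in> borel_measurable P")
        case True
        note cm[measurable] = True
        have cmP: "c \<in> borel_measurable (PiM {..<N} \<mu>)" using cm unfolding P_def by assumption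
        have ip: "integrable \<pi> c" by (rule coupling_integrable[OF polish mu c_growth cmP pi])
        have iss: "integrable \<pi>star c" by (rule coupling_integrable[OF polish mu c_growth cmP opt(1)])
        have ipf: "integrable P (\<lambda>x. f x * c x)" using ip unfolding fd
          by (subst (asm) integrable_density) (use fn in auto)
        have isg: "integrable P (\<lambda>x. g x * c x)" using iss unfolding gd
          by (subst (asm) integrable_density) (use gn in auto)
        have "Cp = (\<integral>x. f x * c x \<partial>P)" unfolding Cp_def fd
          by (subst integral_density) (use fn in auto)
        moreover have "Cs = (\<integral>x. g x * c x \<partial>P)" unfolding Cs_def gd
          by (subst integral_density) (use gn in auto)
        moreover have "(\<integral>x. c x \<partial>\<pi>h) = (\<integral>x. h x * c x \<partial>P)" unfolding \<pi>h_def
          by (subst integral_density) (use hn in auto)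
        moreover have "(\<integral>x. h x * c x \<partial>P) = ((\<integral>x. f x * c x \<partial>P) + (\<integral>x. g x * c x \<partial>P)) / 2"
        proof -
          have "(\<integral>x. h x * c x \<partial>P) = (\<integral>x. (f x * c x + g x * c x) / 2 \<partial>P)"
            unfolding h_def by (simp add: field_simps)
          also have "\<dots> = (\<integral>x. f x * c x + g x * c x \<partial>P) / 2" by simp
          also have "\<dots> = ((\<integral>x. f x * c x \<partial>P) + (\<integral>x. g x * c x \<partial>P)) / 2"
            using ipf isg by simp
          finally show ?thesis .
        qed
        ultimately show ?thesis by simp
      next
        case False
        have "\<not> integrable \<nu> c" if "sets \<nu> = sets P" for \<nu>
          using False measurable_cong_sets[OF that refl] borel_measurable_integrable by blast
        hence "(\<integral>x. c x \<partial>\<nu>) = 0" if "sets \<nu> = sets P" for \<nu>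
          using that not_integrable_integral_eq by blast
        moreover have "sets \<pi>h = sets P" unfolding \<pi>h_def by simp
        ultimately show ?thesis unfolding Cp_def Cs_def using ps(2) pp(2) by simp
      qed
      define gp where "gp x = (f x - g x)^2 / (8 * M * (1 + f x + g x))" for x
      have gp_le: "gp x \<le> (\<phi> (f x) + \<phi> (g x)) / 2 - \<phi> (h x)" for x
        unfolding gp_def h_def M_def by (rule gap[OF lam(3) lam(1) lam(2) fn gn])
      have gp_nn: "0 \<le> gp x" for x unfolding gp_def using Mpos fn[of x] gn[of x] by simp
      have mphih: "(\<lambda>x. \<phi> (h x)) \<in> borel_measurable P" by (rule phi_meas[OF contphi h]) (use hn in auto)
      have gpm: "gp \<in> borel_measurable P" unfolding gp_def by measurable
      have hi: "integrable P (\<lambda>x. \<phi> (h x))"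
      proof (rule Bochner_Integration.integrable_bound[OF _ mphih])
        show "integrable P (\<lambda>x. \<bar>b\<bar> + \<bar>\<phi> (f x)\<bar> + \<bar>\<phi> (g x)\<bar>)" using fi gi by auto
        show "AE x in P. norm (\<phi> (h x)) \<le> norm (\<bar>b\<bar> + \<bar>\<phi> (f x)\<bar> + \<bar>\<phi> (g x)\<bar>)"
        proof (rule AE_I2)
          fix x
          have "b \<le> \<phi> (h x)" using b hn by auto
          moreover have "\<phi> (h x) \<le> (\<phi> (f x) + \<phi> (g x)) / 2" using gp_le[of x] gp_nn[of x] by linarith
          ultimately show "norm (\<phi> (h x)) \<le> norm (\<bar>b\<bar> + \<bar>\<phi> (f x)\<bar> + \<bar>\<phi> (g x)\<bar>)" by simp
        qed
      qed
      have gpi: "integrable P gp"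
      proof (rule Bochner_Integration.integrable_bound[OF _ gpm])
        show "integrable P (\<lambda>x. (\<phi> (f x) + \<phi> (g x)) / 2 - \<phi> (h x))" using fi gi hi by auto
        show "AE x in P. norm (gp x) \<le> norm ((\<phi> (f x) + \<phi> (g x)) / 2 - \<phi> (h x))"
          using gp_le gp_nn by (intro AE_I2) (smt (verit) real_norm_def)
      qed
      define Dh where "Dh = (\<integral>x. \<phi> (h x) \<partial>P)"
      have hD: "phi_div \<phi> \<pi>h P = ereal Dh" unfolding \<pi>h_def Dh_def
        by (rule mid_phi_div[OF sfP contphi h hn hi])
      have "Fs \<le> F_phi \<phi> c P \<pi>h" by (rule OTle[OF \<pi>h_c])
      hence opt_ineq: "Cs + Ds \<le> (Cp + Cs) / 2 + Dh" unfolding FsE F_phi_def hD Ch by simp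
      have "Dh \<le> (\<integral>x. (\<phi> (f x) + \<phi> (g x)) / 2 - gp x \<partial>P)" unfolding Dh_def
      proof (rule integral_mono)
        show "integrable P (\<lambda>x. (\<phi> (f x) + \<phi> (g x)) / 2 - gp x)" using fi gi gpi by auto
        show "\<phi> (h x) \<le> (\<phi> (f x) + \<phi> (g x)) / 2 - gp x" for x using gp_le[of x] by linarith
      qed (rule hi)
      also have "\<dots> = (Dp + Ds) / 2 - (\<integral>x. gp x \<partial>P)" unfolding Dp_def Ds_def
        using fi gi gpi by simp
      finally have gp_int: "(\<integral>x. gp x \<partial>P) \<le> ((Cp + Dp) - (Cs + Ds)) / 2" using opt_ineq by (simp add: field_simps)
      define \<Delta> where "\<Delta> = (Cp + Dp) - (Cs + Ds)"
      have \<Delta>nn: "0 \<le> \<Delta>" using Fle unfolding FsE FpE \<Delta>_def by simp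
      define w where "w x = 1 + f x + g x" for x
      have wpos: "0 < w x" for x unfolding w_def using fn[of x] gn[of x] by simp
      define K where "K = (\<integral>\<^sup>+x. ennreal ((f x - g x)^2 / w x) \<partial>P)"
      have Kle: "K \<le> ennreal (4 * M * \<Delta>)"
      proof -
        have eq: "(f x - g x)^2 / w x = 8 * M * gp x" for x
        proof -
          have "8 * M * gp x = (8 * M * (f x - g x)^2) / (8 * M * w x)"
            unfolding gp_def w_def by (simp add: mult.assoc)
          also have "\<dots> = (f x - g x)^2 / w x"
            by (rule nonzero_mult_divide_mult_cancel_left) (use Mpos in simp)
          finally show ?thesis by simp
        qed
        have "K = (\<integral>\<^sup>+x. ennreal (8 * M * gp x) \<partial>P)" unfolding K_def eq ..
        also have "\<dots> = ennreal (\<integral>x. 8 * M * gp x \<partial>P)"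
          by (rule nn_integral_eq_integral) (use gpi gp_nn Mpos in auto)
        also have "\<dots> = ennreal (8 * M * (\<integral>x. gp x \<partial>P))" by simp
        also have "\<dots> \<le> ennreal (4 * M * \<Delta>)"
          using gp_int Mpos unfolding \<Delta>_def by (intro ennreal_leI) simp
        finally show ?thesis .
      qed
      have dS: "density \<pi>star (\<lambda>x. ennreal (\<rho> x)) = density P (\<lambda>x. ennreal (g x * \<rho> x))"
        unfolding gd
        by (subst density_density_eq) (auto intro!: density_cong AE_I2 simp: ennreal_mult' gn rho_nn)
      have dP: "density \<pi> (\<lambda>x. ennreal (\<rho> x)) = density P (\<lambda>x. ennreal (f x * \<rho> x))"
        unfolding fd
        by (subst density_density_eq) (auto intro!: density_cong AE_I2 simp: ennreal_mult' fn rho_nn)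
      have TVle: "TV \<le> enn2ereal (\<integral>\<^sup>+x. ennreal \<bar>g x * \<rho> x - f x * \<rho> x\<bar> \<partial>P)"
        unfolding TV_def dS dP by (rule tv_bound) (auto simp: gn fn rho_nn)
      define J where "J = (\<integral>\<^sup>+x. ennreal \<bar>g x * \<rho> x - f x * \<rho> x\<bar> \<partial>P)"
      have J_eq: "J = (\<integral>\<^sup>+x. ennreal (\<rho> x * sqrt (w x)) * ennreal (\<bar>f x - g x\<bar> / sqrt (w x)) \<partial>P)"
        unfolding J_def
      proof (rule nn_integral_cong)
        fix x assume x: "x \<in> space P"
        have "\<bar>g x * \<rho> x - f x * \<rho> x\<bar> = (\<rho> x * sqrt (w x)) * (\<bar>f x - g x\<bar> / sqrt (w x))"
          using rho_nn[OF x] wpos[of x] by (simp add: abs_mult left_diff_distrib[symmetric] abs_minus_commute)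
        note e = this
        show "ennreal \<bar>g x * \<rho> x - f x * \<rho> x\<bar> = ennreal (\<rho> x * sqrt (w x)) * ennreal (\<bar>f x - g x\<bar> / sqrt (w x))"
          unfolding e by (rule ennreal_mult) (use rho_nn[OF x] wpos[of x] in auto)
      qed
      have CS: "J^2 \<le> (\<integral>\<^sup>+x. ennreal (\<rho> x * sqrt (w x)) ^ 2 \<partial>P) * (\<integral>\<^sup>+x. ennreal (\<bar>f x - g x\<bar> / sqrt (w x)) ^ 2 \<partial>P)"
        unfolding J_eq by (rule Cauchy_Schwarz_nn_integral) (auto simp: w_def)
      have I_eq: "(\<integral>\<^sup>+x. ennreal (\<rho> x * sqrt (w x)) ^ 2 \<partial>P) = I"
      proof -
        have "(\<integral>\<^sup>+x. ennreal (\<rho> x * sqrt (w x)) ^ 2 \<partial>P)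
            = (\<integral>\<^sup>+x. ennreal (\<bar>\<rho> x\<bar> ^ 2) + ennreal (g x) * ennreal (\<bar>\<rho> x\<bar> ^ 2) + ennreal (f x) * ennreal (\<bar>\<rho> x\<bar> ^ 2) \<partial>P)"
        proof (rule nn_integral_cong)
          fix x assume x: "x \<in> space P"
          have "(\<rho> x * sqrt (w x)) ^ 2 = \<bar>\<rho> x\<bar> ^ 2 + g x * \<bar>\<rho> x\<bar> ^ 2 + f x * \<bar>\<rho> x\<bar> ^ 2"
            using wpos[of x] unfolding w_def by (simp add: power_mult_distrib algebra_simps)
          note e = this
          have "ennreal (\<rho> x * sqrt (w x)) ^ 2 = ennreal ((\<rho> x * sqrt (w x)) ^ 2)"
            by (rule ennreal_power) (use rho_nn[OF x] wpos[of x] in simp)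
          also have "\<dots> = ennreal (\<bar>\<rho> x\<bar> ^ 2 + g x * \<bar>\<rho> x\<bar> ^ 2 + f x * \<bar>\<rho> x\<bar> ^ 2)" unfolding e ..
          also have "\<dots> = ennreal (\<bar>\<rho> x\<bar> ^ 2) + ennreal (g x) * ennreal (\<bar>\<rho> x\<bar> ^ 2) + ennreal (f x) * ennreal (\<bar>\<rho> x\<bar> ^ 2)"
            by (rule aux3) (use fn gn in auto)
          finally show "ennreal (\<rho> x * sqrt (w x)) ^ 2 = ennreal (\<bar>\<rho> x\<bar> ^ 2) + ennreal (g x) * ennreal (\<bar>\<rho> x\<bar> ^ 2) + ennreal (f x) * ennreal (\<bar>\<rho> x\<bar> ^ 2)" .
        qed
        also have "\<dots> = (\<integral>\<^sup>+x. ennreal (\<bar>\<rho> x\<bar> ^ 2) \<partial>P) + (\<integral>\<^sup>+x. ennreal (g x) * ennreal (\<bar>\<rho> x\<bar> ^ 2) \<partial>P)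
                        + (\<integral>\<^sup>+x. ennreal (f x) * ennreal (\<bar>\<rho> x\<bar> ^ 2) \<partial>P)"
          by (simp add: nn_integral_add)
        also have "\<dots> = I" unfolding I_def gd fd by (simp add: nn_integral_density)
        finally show ?thesis .
      qed
      have K_eq: "(\<integral>\<^sup>+x. ennreal (\<bar>f x - g x\<bar> / sqrt (w x)) ^ 2 \<partial>P) = K"
        unfolding K_def
      proof (rule nn_integral_cong)
        fix x
        show "ennreal (\<bar>f x - g x\<bar> / sqrt (w x)) ^ 2 = ennreal ((f x - g x)^2 / w x)"
          using wpos[of x] by (simp add: ennreal_power power_divide)
      qed
      have J2: "J^2 \<le> I * ennreal (4 * M * \<Delta>)"
        using CS I_eq K_eq Kle by (metis mult_left_mono zero_le order_trans)
      have "TV ^ 2 \<le> (enn2ereal J) ^ 2"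
        by (rule ereal_sq_mono) (use tv_nonneg TVle in \<open>auto simp: TV_def J_def\<close>)
      also have "\<dots> = enn2ereal (J ^ 2)" by (simp add: power2_eq_square times_ennreal.rep_eq)
      also have "\<dots> \<le> enn2ereal (I * ennreal (4 * M * \<Delta>))" using J2 by (simp add: less_eq_ennreal.rep_eq)
      also have "\<dots> = ereal (4 * M) * enn2ereal I * (Fp - Fs)"
        using \<Delta>nn Mpos unfolding FsE FpE \<Delta>_def by (simp add: times_ennreal.rep_eq mult_ac)
      finally show ?thesis .
    qed
  qed
  show ?thesis using goal unfolding TV_def I_def Fp_def Fs_def M_def P_def .
qed

end
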